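(* Let $\rho\in\mathbb R$, let $\mathbf a=(a_{m,n})$ be a complex matrix and let $\kappa_{\mathbf a}:\mathbb H_\rho\times\mathbb H_\rho\to\mathbb C$ be a positive semi-definite Dirichlet series kernel with coefficient matrix $\mathbf a$. Then $\kappa_{\mathbf a}$ is translation-invariant, i.e. $\kappa_{\mathbf a}(s-ib,u-ib)=\kappa_{\mathbf a}(s,u)$ for all $b\in\mathbb R$ and $s,u\in\mathbb H_\rho$, if and only if $\mathbf a$ is a diagonal matrix.
   Context: $\mathbb H_\rho=\{\Re s>\rho\}$. $\kappa_{\mathbf a}(s,u)=\sum_{m,n\ge1}a_{m,n}m^{-s}n^{-\bar u}$ is a Dirichlet series kernel on $\mathbb H_\rho$ if $(s,u)\mapsto\kappa_{\mathbf a}(s,\bar u)$ is regularly convergent on $\mathbb H_\rho\times\mathbb H_\rho$ (regular convergence of $\sum c_{m,n}m^{-s}n^{-u}$ at $(s_0,u_0)$: the double series converges there and every series $\sum_m c_{m,n}m^{-s_0}$ and $\sum_n c_{m,n}n^{-u_0}$ converges). Positive semi-definite: every finite matrix $(\kappa_{\mathbf a}(s_i,s_j))$ is positive semi-definite. *)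

theory Defs
  imports "HOL-Analysis.Analysis"
begin

definition dd_partial :: "(nat \<Rightarrow> nat \<Rightarrow> complex) \<Rightarrow> complex \<Rightarrow> complex \<Rightarrow> nat \<times> nat \<Rightarrow> complex" where
  "dd_partial c s u = (\<lambda>(M, N). \<Sum>m\<in>{1..M}. \<Sum>n\<in>{1..N}.
      c m n * of_nat m powr (-s) * of_nat n powr (-u))"

text \<open>Regular convergence (Hardy) at (s,u): the double series converges (Pringsheim sense)
  and every row series and every column series converges.\<close>
definition regularly_convergent_at ::
  "(nat \<Rightarrow> nat \<Rightarrow> complex) \<Rightarrow> complex \<Rightarrow> complex \<Rightarrow> bool" where
  "regularly_convergent_at c s u \<longleftrightarrow>
     (\<exists>L. (dd_partial c s u \<longlongrightarrow> L) (sequentially \<times>\<^sub>F sequentially)) \<and>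
     (\<forall>n\<ge>1. summable (\<lambda>m. c (Suc m) n * of_nat (Suc m) powr (-s))) \<and>
     (\<forall>m\<ge>1. summable (\<lambda>n. c m (Suc n) * of_nat (Suc n) powr (-u)))"

definition halfplane :: "real \<Rightarrow> complex set" where
  "halfplane \<rho> = {s. Re s > \<rho>}"

definition ds_kernel :: "(nat \<Rightarrow> nat \<Rightarrow> complex) \<Rightarrow> complex \<Rightarrow> complex \<Rightarrow> complex" where
  "ds_kernel a s u = Lim (sequentially \<times>\<^sub>F sequentially) (dd_partial a s (cnj u))"

text \<open>Dirichlet series kernel on H_rho: (s,u) |-> kappa_a(s, conj u) regularly convergent on H_rho x H_rho.\<close>
definition is_ds_kernel :: "real \<Rightarrow> (nat \<Rightarrow> nat \<Rightarrow> complex) \<Rightarrow> bool" where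
  "is_ds_kernel \<rho> a \<longleftrightarrow>
     (\<forall>s\<in>halfplane \<rho>. \<forall>u\<in>halfplane \<rho>. regularly_convergent_at a s u)"

definition psd_kernel_on :: "complex set \<Rightarrow> (complex \<Rightarrow> complex \<Rightarrow> complex) \<Rightarrow> bool" where
  "psd_kernel_on S K \<longleftrightarrow>
     (\<forall>(k::nat) (p::nat \<Rightarrow> complex) (v::nat \<Rightarrow> complex).
        (\<forall>i<k. p i \<in> S) \<longrightarrow>
        (let q = (\<Sum>i<k. \<Sum>j<k. cnj (v i) * K (p i) (p j) * v j) in q \<in> \<real> \<and> Re q \<ge> 0))"

end

theory Submission
  imports Defs
begin


definition E :: "real \<Rightarrow> nat \<Rightarrow> complex" where
  "E t m = exp (\<i> * of_real (t * ln (real m)))"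

lemma norm_E [simp]: "norm (E t m) = 1"
  unfolding E_def by simp

lemma my_infsum_diff:
  fixes f g :: "'a \<Rightarrow> 'b::{topological_ab_group_add, t2_space}"
  assumes "f summable_on A" "g summable_on A"
  shows "infsum (\<lambda>x. f x - g x) A = infsum f A - infsum g A"
proof -
  have "(\<lambda>x. - g x) summable_on A" using assms(2) summable_on_uminus by blast
  then have "infsum (\<lambda>x. f x + - g x) A = infsum f A + infsum (\<lambda>x. - g x) A"
    using infsum_add[OF assms(1)] by blast
  then show ?thesis by (simp add: infsum_uminus)
qed

lemma good_h:
  fixes k :: nat
  assumes "k \<ge> 1"
  shows "\<exists>h::real. \<forall>m. m \<ge> 1 \<longrightarrow> m \<noteq> k \<longrightarrow>
            exp (\<i> * of_real (h * (ln (real m) - ln (real k)))) \<noteq> 1"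
proof -
  define B where "B = (\<Union>m\<in>{m. m \<ge> 1 \<and> m \<noteq> k}.
      range (\<lambda>j::int. real_of_int (2 * j) * pi / (ln (real m) - ln (real k))))"
  have "countable B" unfolding B_def by (intro countable_UN) auto
  then have "B \<noteq> UNIV" using uncountable_UNIV_real by auto
  then obtain h where h: "h \<notin> B" by auto
  show ?thesis
  proof (intro exI allI impI)
    fix m :: nat assume m: "m \<ge> 1" "m \<noteq> k"
    have ne: "ln (real m) - ln (real k) \<noteq> 0"
      using m assms by simp
    show "exp (\<i> * of_real (h * (ln (real m) - ln (real k)))) \<noteq> 1"
    proof
      assume "exp (\<i> * of_real (h * (ln (real m) - ln (real k)))) = 1"
      then obtain n where n: "h * (ln (real m) - ln (real k)) = real_of_int (2 * n) * pi"
        by (auto simp: exp_eq_1)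
      then have "h = real_of_int (2 * n) * pi / (ln (real m) - ln (real k))"
        using ne by (simp add: field_simps)
      then have "h \<in> B" unfolding B_def using m by blast
      with h show False by blast
    qed
  qed
qed

lemma E_prod_pow:
  "E (real j * h) m * E (- (real j * h)) k = exp (\<i> * of_real (h * (ln (real m) - ln (real k)))) ^ j"
  unfolding E_def
  by (simp add: exp_of_nat_mult[symmetric] exp_add[symmetric] algebra_simps)

lemma uniq_suminf:
  fixes d :: "nat \<Rightarrow> complex"
  assumes sd: "summable (\<lambda>m. norm (d m))" and d0: "d 0 = 0"
    and z: "\<And>t. (\<Sum>m. d m * E t m) = 0"
  shows "d k = 0"
proof (cases "k = 0")
  case True then show ?thesis using d0 by simp
next
  case False
  then have k1: "k \<ge> 1" by simp
  obtain h where h: "\<And>m. m \<ge> 1 \<Longrightarrow> m \<noteq> k \<Longrightarrow>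
            exp (\<i> * of_real (h * (ln (real m) - ln (real k)))) \<noteq> 1"
    using good_h[OF k1] by blast
  define w where "w m = exp (\<i> * of_real (h * (ln (real m) - ln (real k))))" for m
  define A where "A m N = (\<Sum>j<N. w m ^ j) / of_nat N" for m N
  have sdE: "summable (\<lambda>m. d m * E t m)" for t
    by (rule summable_norm_cancel) (simp add: norm_mult sd)
  have normw: "norm (w m) = 1" for m unfolding w_def by simp
  have normA: "norm (A m N) \<le> 1" for m N
  proof (cases "N = 0")
    case True then show ?thesis by (simp add: A_def)
  next
    case False
    have "norm (\<Sum>j<N. w m ^ j) \<le> (\<Sum>j<N. norm (w m ^ j))" by (rule norm_sum)
    also have "\<dots> = of_nat N" by (simp add: norm_power normw)
    finally show ?thesis using False by (simp add: A_def norm_divide)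
  qed
  have zero: "(\<Sum>m. d m * A m N) = 0" for N
  proof -
    have "(\<Sum>m. d m * A m N) = (\<Sum>m. (\<Sum>j<N. d m * E (real j * h) m * E (- (real j * h)) k) / of_nat N)"
      by (simp add: A_def w_def E_prod_pow sum_distrib_left mult.assoc)
    also have "\<dots> = (\<Sum>m. (\<Sum>j<N. d m * E (real j * h) m * E (- (real j * h)) k)) / of_nat N"
      by (rule suminf_divide) (intro summable_sum summable_mult2 sdE)
    also have "(\<Sum>m. (\<Sum>j<N. d m * E (real j * h) m * E (- (real j * h)) k))
        = (\<Sum>j<N. (\<Sum>m. d m * E (real j * h) m * E (- (real j * h)) k))"
      by (rule suminf_sum) (intro summable_mult2 sdE)
    also have "\<dots> = (\<Sum>j<N. (\<Sum>m. d m * E (real j * h) m) * E (- (real j * h)) k)"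
      by (intro sum.cong refl suminf_mult2[symmetric] sdE)
    also have "\<dots> = 0" by (simp add: z)
    finally show ?thesis by simp
  qed
  have lim: "(\<lambda>N. \<Sum>m. d m * A m N) \<longlonglongrightarrow> (\<Sum>m. if m = k then d m else 0)"
  proof (rule conjunct2[OF conjunct2[OF tannerys_theorem[where M = "\<lambda>m. norm (d m)"]]])
    show "sequentially \<noteq> bot" by simp
    show "summable (\<lambda>m. norm (d m))" by (rule sd)
    show "\<forall>\<^sub>F (m, N) in at_top \<times>\<^sub>F sequentially. norm (d m * A m N) \<le> norm (d m)"
      by (intro always_eventually allI) (auto simp: norm_mult intro: mult_left_le[OF normA])
    fix m
    show "(\<lambda>N. d m * A m N) \<longlonglongrightarrow> (if m = k then d m else 0)"
    proof (cases "m = k")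
      case True
      have "w m = 1" using True by (simp add: w_def)
      have "\<forall>\<^sub>F N in sequentially. d m * A m N = d m"
        by (rule eventually_mono[OF eventually_gt_at_top[of 0]]) (simp add: A_def \<open>w m = 1\<close>)
      then show ?thesis using True by (simp add: tendsto_eventually)
    next
      case mk: False
      show ?thesis
      proof (cases "m = 0")
        case True then show ?thesis using d0 by simp
      next
        case False
        then have w1: "w m \<noteq> 1" using h[of m] mk by (simp add: w_def)
        have "(\<lambda>N. A m N) \<longlonglongrightarrow> 0"
        proof (rule Lim_null_comparison)
          show "\<forall>\<^sub>F N in sequentially. norm (A m N) \<le> (2 / norm (1 - w m)) / real N"
          proof (intro always_eventually allI)
            fix N
            have "norm (1 - w m ^ N) \<le> 2"
              using norm_triangle_ineq4[of 1 "w m ^ N"] by (simp add: norm_power normw)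
            then have le2: "norm (1 - w m ^ N) \<le> 2" .
            have "A m N = (1 - w m ^ N) / ((1 - w m) * of_nat N)"
              unfolding A_def sum_gp_strict using w1 by simp
            then have "norm (A m N) = norm (1 - w m ^ N) / (norm (1 - w m) * real N)"
              by (simp only: norm_divide norm_mult norm_of_nat)
            also have "\<dots> \<le> 2 / (norm (1 - w m) * real N)"
              using le2 by (intro divide_right_mono) (simp_all add: zero_le_mult_iff)
            finally show "norm (A m N) \<le> (2 / norm (1 - w m)) / real N" by (simp only: divide_divide_eq_left)
          qed
          show "(\<lambda>N. (2 / norm (1 - w m)) / real N) \<longlonglongrightarrow> 0"
            by (rule lim_const_over_n)
        qed
        then have "(\<lambda>N. d m * A m N) \<longlonglongrightarrow> d m * 0" by (intro tendsto_intros)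
        then show ?thesis using mk by simp
      qed
    qed
  qed
  have "(\<Sum>m. if m = k then d m else 0) = d k"
    using sums_single[of k d] by (simp add: sums_iff)
  with lim zero have "(\<lambda>N. 0::complex) \<longlonglongrightarrow> d k" by simp
  then show ?thesis by (simp add: LIMSEQ_const_iff)
qed



definition wsq :: "nat \<Rightarrow> real" where "wsq m = inverse (real m ^ 2)"

lemma wsq_nonneg: "wsq m \<ge> 0" by (simp add: wsq_def)

lemma wsq_summable: "summable wsq"
  unfolding wsq_def using inverse_power_summable[of 2, where 'a=real] by simp

lemma infsum_eq_suminf_nat:
  fixes f :: "nat \<Rightarrow> 'a::banach"
  assumes "summable (\<lambda>n. norm (f n))"
  shows "infsum f UNIV = suminf f"
  by (rule infsumI[OF norm_summable_imp_has_sum[OF assms summable_sums[OF summable_norm_cancel[OF assms]]]])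

lemma S1:
  fixes f :: "nat \<Rightarrow> 'a::banach"
  assumes b: "\<And>m. norm (f m) \<le> B * wsq m"
  shows "(\<lambda>x. norm (f x)) summable_on UNIV" and "norm (infsum f UNIV) \<le> B * suminf wsq"
proof -
  have B0: "B \<ge> 0" using order_trans[OF norm_ge_zero b[of 1]] by (simp add: wsq_def)
  have sg: "summable (\<lambda>m. B * wsq m)" by (intro summable_mult wsq_summable)
  have sgn: "summable (\<lambda>m. norm (B * wsq m))"
    using sg B0 wsq_nonneg by (simp add: abs_mult)
  have gs: "(\<lambda>m. B * wsq m) summable_on UNIV" by (rule norm_summable_imp_summable_on[OF sgn])
  show fs: "(\<lambda>x. norm (f x)) summable_on UNIV"
    by (rule summable_on_comparison_test[OF gs]) (use b in auto)
  have ig: "infsum (\<lambda>m. B * wsq m) UNIV = B * suminf wsq"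
    using infsum_eq_suminf_nat[OF sgn] suminf_mult[OF wsq_summable] by simp
  have "norm (infsum f UNIV) \<le> infsum (\<lambda>m. norm (f m)) UNIV"
    by (rule norm_infsum_bound[OF fs])
  also have "\<dots> \<le> infsum (\<lambda>m. B * wsq m) UNIV"
    by (rule infsum_mono[OF fs gs]) (use b in auto)
  finally show "norm (infsum f UNIV) \<le> B * suminf wsq" using ig by simp
qed

lemma S2:
  fixes f :: "nat \<times> nat \<Rightarrow> 'a::banach"
  assumes b: "\<And>m n. norm (f (m, n)) \<le> B * wsq m * wsq n"
  shows "(\<lambda>x. norm (f x)) summable_on UNIV"
proof -
  have "(\<lambda>x. norm (f x)) summable_on UNIV \<times> UNIV"
  proof (rule Infinite_Sum.abs_summable_on_Sigma_iff[THEN iffD2], intro conjI ballI)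
    fix m :: nat
    show "(\<lambda>n. norm (f (m, n))) summable_on UNIV"
      by (rule S1(1)[where B = "B * wsq m"]) (use b in auto)
  next
    show "(\<lambda>m. norm (\<Sum>\<^sub>\<infinity>n\<in>UNIV. norm (f (m, n)))) summable_on UNIV"
    proof (rule S1(1)[where B = "B * suminf wsq"])
      fix m
      have "norm (\<Sum>\<^sub>\<infinity>n\<in>UNIV. norm (f (m, n))) \<le> (B * wsq m) * suminf wsq"
        by (rule S1(2)) (use b in auto)
      then show "norm (\<Sum>\<^sub>\<infinity>n\<in>UNIV. norm (f (m, n))) \<le> B * suminf wsq * wsq m"
        by (simp add: algebra_simps)
    qed
  qed
  then show ?thesis by simp
qed

lemma uniq_infsum:
  fixes d :: "nat \<Rightarrow> complex"
  assumes sd: "(\<lambda>x. norm (d x)) summable_on UNIV" and d0: "d 0 = 0"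
    and z: "\<And>t. infsum (\<lambda>m. d m * E t m) UNIV = 0"
  shows "d k = 0"
proof -
  have s: "summable (\<lambda>m. norm (d m))" using summable_on_imp_summable[OF sd] .
  have s2: "summable (\<lambda>m. norm (d m * E t m))" for t using s by (simp add: norm_mult)
  show ?thesis
  proof (rule uniq_suminf[OF s d0])
    fix t show "(\<Sum>m. d m * E t m) = 0" using z[of t] infsum_eq_suminf_nat[OF s2[of t]] by simp
  qed
qed

lemma L_rect:
  fixes g :: "nat \<times> nat \<Rightarrow> 'a::{comm_monoid_add,topological_space}"
  assumes "(g has_sum S) UNIV"
  shows "((\<lambda>(M,N). \<Sum>m\<le>M. \<Sum>n\<le>N. g (m,n)) \<longlongrightarrow> S) (sequentially \<times>\<^sub>F sequentially)"
proof -
  have fl: "filterlim (\<lambda>(M,N). {..M} \<times> {..N}) (finite_subsets_at_top UNIV) (sequentially \<times>\<^sub>F sequentially)"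
    unfolding filterlim_finite_subsets_at_top
  proof (intro allI impI, elim conjE)
    fix X :: "(nat \<times> nat) set" assume fX: "finite X"
    then have "finite (fst ` X \<union> snd ` X)" by simp
    then obtain k where k: "fst ` X \<union> snd ` X \<subseteq> {..<k}" using finite_nat_bounded by blast
    show "\<forall>\<^sub>F y in sequentially \<times>\<^sub>F sequentially.
            finite (case y of (M, N) \<Rightarrow> {..M} \<times> {..N}) \<and> X \<subseteq> (case y of (M, N) \<Rightarrow> {..M} \<times> {..N}) \<and>
            (case y of (M, N) \<Rightarrow> {..M} \<times> {..N}) \<subseteq> UNIV"
      unfolding eventually_prod_sequentially
    proof (intro exI allI impI)
      fix m n :: nat assume "m \<ge> k" "n \<ge> k"
      then show "finite (case (n, m) of (M, N) \<Rightarrow> {..M} \<times> {..N}) \<and> X \<subseteq> (case (n, m) of (M, N) \<Rightarrow> {..M} \<times> {..N}) \<and>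
            (case (n, m) of (M, N) \<Rightarrow> {..M} \<times> {..N}) \<subseteq> UNIV"
        using k by force
    qed
  qed
  have "((\<lambda>x. sum g x) \<longlongrightarrow> S) (finite_subsets_at_top UNIV)"
    using assms by (simp add: has_sum_def)
  from filterlim_compose[OF this fl]
  have "((\<lambda>p. sum g (case p of (M, N) \<Rightarrow> {..M} \<times> {..N})) \<longlongrightarrow> S) (sequentially \<times>\<^sub>F sequentially)" .
  moreover have "(\<lambda>p. sum g (case p of (M, N) \<Rightarrow> {..M} \<times> {..N})) = (\<lambda>(M,N). \<Sum>m\<le>M. \<Sum>n\<le>N. g (m,n))"
    by (auto simp: sum.cartesian_product split: prod.split)
  ultimately show ?thesis by simp
qed



lemma cpow_nat: "m > 0 \<Longrightarrow> (of_nat m :: complex) powr z = exp (z * of_real (ln (real m)))"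
  by (simp add: powr_def Ln_of_nat)

lemma cpow_zero_nat [simp]: "(of_nat 0 :: complex) powr z = 0"
  by simp

lemma summable_bounded:
  fixes f :: "nat \<Rightarrow> complex"
  assumes "summable f" shows "\<exists>B. \<forall>n. norm (f n) \<le> B"
proof -
  have "convergent f" using summable_LIMSEQ_zero[OF assms] by (auto simp: convergent_def)
  then have "Bseq f" by (rule convergent_imp_Bseq)
  then show ?thesis by (auto simp: Bseq_def)
qed

lemma double_sum_diff:
  fixes f :: "nat \<Rightarrow> nat \<Rightarrow> complex"
  defines "F \<equiv> \<lambda>M N. \<Sum>m\<in>{1..M}. \<Sum>n\<in>{1..N}. f m n"
  shows "f (Suc i) (Suc j) = F (Suc i) (Suc j) - F i (Suc j) - F (Suc i) j + F i j"
proof -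
  have r: "F (Suc i) N = F i N + (\<Sum>n\<in>{1..N}. f (Suc i) n)" for N
    unfolding F_def by (simp add: sum.cl_ivl_Suc)
  have c: "F M (Suc j) = F M j + (\<Sum>m\<in>{1..M}. f m (Suc j))" for M
    unfolding F_def by (simp add: sum.cl_ivl_Suc sum.distrib)
  have "(\<Sum>n\<in>{1..Suc j}. f (Suc i) n) = (\<Sum>n\<in>{1..j}. f (Suc i) n) + f (Suc i) (Suc j)"
    by (simp add: sum.cl_ivl_Suc)
  then show ?thesis using r[of "Suc j"] r[of j] c[of i] by simp
qed

lemma dd_partial_diff:
  "a (Suc i) (Suc j) * of_nat (Suc i) powr (-s) * of_nat (Suc j) powr (-u) =
     dd_partial a s u (Suc i, Suc j) - dd_partial a s u (i, Suc j)
     - dd_partial a s u (Suc i, j) + dd_partial a s u (i, j)"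
  using double_sum_diff[of "\<lambda>m n. a m n * of_nat m powr (-s) * of_nat n powr (-u)" i j]
  by (simp add: dd_partial_def)

lemma L_bound:
  assumes rc: "regularly_convergent_at a s u"
  shows "\<exists>C. \<forall>m n. norm (a m n * of_nat m powr (-s) * of_nat n powr (-u)) \<le> C"
proof -
  define t where "t m n = a m n * of_nat m powr (-s) * of_nat n powr (-u)" for m n
  from rc obtain L where L: "(dd_partial a s u \<longlongrightarrow> L) (sequentially \<times>\<^sub>F sequentially)"
    and rows: "\<forall>n\<ge>1. summable (\<lambda>m. a (Suc m) n * of_nat (Suc m) powr (-s))"
    and cols: "\<forall>m\<ge>1. summable (\<lambda>n. a m (Suc n) * of_nat (Suc n) powr (-u))"
    unfolding regularly_convergent_at_def by blast
  have "\<forall>\<^sub>F x in sequentially \<times>\<^sub>F sequentially. dist (dd_partial a s u x) L < 1"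
    using tendstoD[OF L, of 1] by simp
  then obtain K where K: "\<And>i j. i \<ge> K \<Longrightarrow> j \<ge> K \<Longrightarrow> dist (dd_partial a s u (j, i)) L < 1"
    unfolding eventually_prod_sequentially by blast
  have t0: "t 0 n = 0" "t m 0 = 0" for m n by (simp_all add: t_def)
  have big: "norm (t m n) \<le> 4" if "m \<ge> Suc K" "n \<ge> Suc K" for m n
  proof -
    define i where "i = m - 1"
    define j where "j = n - 1"
    have ij: "m = Suc i" "n = Suc j" "i \<ge> K" "j \<ge> K"
      using that by (simp_all add: i_def j_def)
    define P where "P = dd_partial a s u"
    have e0: "t m n = P (Suc i, Suc j) - P (i, Suc j) - P (Suc i, j) + P (i, j)"
      unfolding t_def ij(1,2) P_def by (rule dd_partial_diff)
    have e: "t m n = (P (Suc i, Suc j) - L) - (P (i, Suc j) - L) - (P (Suc i, j) - L) + (P (i, j) - L)"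
      unfolding e0 by (simp add: algebra_simps)
    have n1: "norm (P (Suc i, Suc j) - L) < 1" using K[of "Suc j" "Suc i"] ij by (simp add: P_def dist_norm)
    have n2: "norm (P (i, Suc j) - L) < 1" using K[of "Suc j" i] ij by (simp add: P_def dist_norm)
    have n3: "norm (P (Suc i, j) - L) < 1" using K[of j "Suc i"] ij by (simp add: P_def dist_norm)
    have n4: "norm (P (i, j) - L) < 1" using K[of j i] ij by (simp add: P_def dist_norm)
    have tri: "norm (w - x - y + z) \<le> norm w + norm x + norm y + norm z" for w x y z :: complex
    proof -
      have "norm (w - x - y + z) \<le> norm (w - x - y) + norm z" by (rule norm_triangle_ineq)
      moreover have "norm (w - x - y) \<le> norm (w - x) + norm y" by (rule norm_triangle_ineq4)
      moreover have "norm (w - x) \<le> norm w + norm x" by (rule norm_triangle_ineq4)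
      ultimately show ?thesis by linarith
    qed
    show ?thesis unfolding e using tri[of "P (Suc i, Suc j) - L" "P (i, Suc j) - L" "P (Suc i, j) - L" "P (i, j) - L"] n1 n2 n3 n4
      by linarith
  qed
  have "\<forall>m. \<exists>B. m \<ge> 1 \<longrightarrow> (\<forall>n. norm (t m n) \<le> B)"
  proof
    fix m show "\<exists>B. m \<ge> 1 \<longrightarrow> (\<forall>n. norm (t m n) \<le> B)"
    proof (cases "m \<ge> 1")
      case True
      have "summable (\<lambda>n. of_nat m powr (-s) * (a m (Suc n) * of_nat (Suc n) powr (-u)))"
        using cols True by (intro summable_mult) auto
      then obtain B where B: "\<And>n. norm (of_nat m powr (-s) * (a m (Suc n) * of_nat (Suc n) powr (-u))) \<le> B"
        using summable_bounded by blast
      have "norm (t m n) \<le> B" for n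
      proof (cases n)
        case 0 then show ?thesis using t0 order_trans[OF norm_ge_zero B[of 0]] by simp
      next
        case (Suc n') then show ?thesis using B[of n'] by (simp add: t_def algebra_simps)
      qed
      then show ?thesis by blast
    qed auto
  qed
  then obtain R where R: "\<And>m n. m \<ge> 1 \<Longrightarrow> norm (t m n) \<le> R m" by metis
  have "\<forall>n. \<exists>B. n \<ge> 1 \<longrightarrow> (\<forall>m. norm (t m n) \<le> B)"
  proof
    fix n show "\<exists>B. n \<ge> 1 \<longrightarrow> (\<forall>m. norm (t m n) \<le> B)"
    proof (cases "n \<ge> 1")
      case True
      have "summable (\<lambda>m. (a (Suc m) n * of_nat (Suc m) powr (-s)) * of_nat n powr (-u))"
        using rows True by (intro summable_mult2) auto
      then obtain B where B: "\<And>m. norm ((a (Suc m) n * of_nat (Suc m) powr (-s)) * of_nat n powr (-u)) \<le> B"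
        using summable_bounded by blast
      have "norm (t m n) \<le> B" for m
      proof (cases m)
        case 0 then show ?thesis using t0 order_trans[OF norm_ge_zero B[of 0]] by simp
      next
        case (Suc m') then show ?thesis using B[of m'] by (simp add: t_def algebra_simps)
      qed
      then show ?thesis by blast
    qed auto
  qed
  then obtain Q where Q: "\<And>m n. n \<ge> 1 \<Longrightarrow> norm (t m n) \<le> Q n" by metis
  define C where "C = 4 + (\<Sum>m\<le>K. \<bar>R m\<bar>) + (\<Sum>n\<le>K. \<bar>Q n\<bar>)"
  have C1: "(\<Sum>m\<le>K. \<bar>R m\<bar>) \<ge> 0" "(\<Sum>n\<le>K. \<bar>Q n\<bar>) \<ge> 0" by (simp_all add: sum_nonneg)
  have "norm (t m n) \<le> C" for m n
  proof -
    consider "m = 0" | "n = 0" | "m \<ge> 1" "m \<le> K" | "n \<ge> 1" "n \<le> K" | "m \<ge> Suc K" "n \<ge> Suc K"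
      by linarith
    then show ?thesis
    proof cases
      case 1 then show ?thesis using t0 C1 by (simp add: C_def)
    next
      case 2 then show ?thesis using t0 C1 by (simp add: C_def)
    next
      case 3
      have "norm (t m n) \<le> \<bar>R m\<bar>" using R[of m n] 3 by simp
      also have "\<dots> \<le> (\<Sum>m\<le>K. \<bar>R m\<bar>)"
        by (rule member_le_sum) (use 3 in auto)
      finally have "norm (t m n) \<le> \<dots>" .
      then show ?thesis using C1 unfolding C_def by linarith
    next
      case 4
      have "norm (t m n) \<le> \<bar>Q n\<bar>" using Q[of n m] 4 by simp
      also have "\<dots> \<le> (\<Sum>n\<le>K. \<bar>Q n\<bar>)"
        by (rule member_le_sum) (use 4 in auto)
      finally have "norm (t m n) \<le> \<dots>" .
      then show ?thesis using C1 unfolding C_def by linarith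
    next
      case 5 then show ?thesis using big[OF 5] C1 unfolding C_def by linarith
    qed
  qed
  then show ?thesis unfolding t_def by blast
qed



lemma norm_cpow_nat: "m > 0 \<Longrightarrow> norm ((of_nat m :: complex) powr z) = real m powr Re z"
  by (simp add: cpow_nat norm_exp_eq_Re powr_def)

lemma E_zero [simp]: "E 0 m = 1" by (simp add: E_def)

lemma E_add: "E (x + y) m = E x m * E y m"
  by (simp add: E_def mult_exp_exp algebra_simps)

lemma pow_split:
  "(of_nat m :: complex) powr (-(of_real \<sigma> + \<i> * of_real t)) = of_real (real m powr (-\<sigma>)) * E (-t) m"
proof (cases "m = 0")
  case True then show ?thesis by simp
next
  case False
  then have "(of_nat m :: complex) powr (-(of_real \<sigma> + \<i> * of_real t))
      = exp (of_real (-\<sigma> * ln (real m)) + \<i> * of_real (-t * ln (real m)))"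
    using False by (subst cpow_nat) (auto intro!: arg_cong[where f=exp] simp: algebra_simps)
  also have "\<dots> = of_real (real m powr (-\<sigma>)) * E (-t) m"
    using False by (subst exp_add) (simp add: E_def powr_def of_real_exp)
  finally show ?thesis .
qed

lemma sum_from1: "f 0 = 0 \<Longrightarrow> sum f {1..M} = sum f {..(M::nat)}"
proof -
  assume f0: "f 0 = 0"
  have "{..M} = insert 0 {1..M}" by auto
  then show ?thesis using f0 by simp
qed

lemma infsum_single_nat:
  "infsum (\<lambda>m::nat. if m = n then X else 0) UNIV = (X :: complex)"
  by (rule infsumI, rule has_sum_finite_neutralI[of "{n}"]) auto

lemma diag_term:
  "(of_nat m :: complex) powr (-(s - \<i> * of_real b)) * of_nat m powr (-(cnj (u - \<i> * of_real b)))
   = of_nat m powr (-s) * of_nat m powr (-(cnj u))"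
proof (cases "m = 0")
  case True then show ?thesis by simp
next
  case False
  then show ?thesis by (simp add: cpow_nat mult_exp_exp algebra_simps)
qed



lemma powr_split3:
  assumes "m > 0"
  shows "real m powr (-(\<rho> + 3)) = real m powr (-(\<rho> + 1)) * wsq m"
proof -
  have "real m powr (-(\<rho> + 3)) = real m powr (-(\<rho> + 1)) * real m powr (-2)"
  proof -
    have "-(\<rho> + 3) = -(\<rho> + 1) + (-2)" by simp
    then show ?thesis by (simp only: powr_add)
  qed
  also have "real m powr (-2) = wsq m"
    using assms by (simp add: wsq_def powr_minus)
  finally show ?thesis .
qed

lemma forward:
  fixes \<rho> :: real and a :: "nat \<Rightarrow> nat \<Rightarrow> complex"
  assumes dk: "is_ds_kernel \<rho> a"
    and inv: "\<forall>b::real. \<forall>s\<in>halfplane \<rho>. \<forall>u\<in>halfplane \<rho>.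
            ds_kernel a (s - \<i> * of_real b) (u - \<i> * of_real b) = ds_kernel a s u"
  shows "\<forall>m\<ge>1. \<forall>n\<ge>1. m \<noteq> n \<longrightarrow> a m n = 0"
proof -
  define s0 where "s0 = complex_of_real (\<rho> + 1)"
  have "s0 \<in> halfplane \<rho>" by (simp add: s0_def halfplane_def)
  then have "regularly_convergent_at a s0 s0" using dk by (simp add: is_ds_kernel_def)
  from L_bound[OF this] obtain C where
    C: "\<And>m n. norm (a m n * of_nat m powr (-s0) * of_nat n powr (-s0)) \<le> C" by blast
  define \<sigma> where "\<sigma> = \<rho> + 3"
  define c where "c m n = a m n * of_real (real m powr (-\<sigma>)) * of_real (real n powr (-\<sigma>))" for m n
  have c0: "c 0 n = 0" "c m 0 = 0" for m n by (simp_all add: c_def)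
  have cb: "norm (c m n) \<le> C * wsq m * wsq n" for m n
  proof (cases "m = 0 \<or> n = 0")
    case True then show ?thesis using c0 by (auto simp: wsq_def)
  next
    case False
    then have mn: "m > 0" "n > 0" by auto
    have "norm (c m n) = (norm (a m n) * real m powr (-(\<rho>+1)) * real n powr (-(\<rho>+1))) * wsq m * wsq n"
      using mn powr_split3[of m \<rho>] powr_split3[of n \<rho>] unfolding \<sigma>_def[symmetric]
      by (simp add: c_def norm_mult wsq_nonneg)
    also have "norm (a m n) * real m powr (-(\<rho>+1)) * real n powr (-(\<rho>+1))
        = norm (a m n * of_nat m powr (-s0) * of_nat n powr (-s0))"
      using mn by (simp add: norm_mult norm_cpow_nat s0_def)
    finally show ?thesis using C[of m n] wsq_nonneg[of m] wsq_nonneg[of n]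
      by (simp add: mult_right_mono)
  qed
  define K where "K t1 t2 = ds_kernel a (of_real \<sigma> - \<i> * of_real t1) (of_real \<sigma> - \<i> * of_real t2)" for t1 t2
  have Kform: "K t1 t2 = infsum (\<lambda>(m,n). c m n * E t1 m * E (-t2) n) UNIV" for t1 t2
  proof -
    define g where "g = (\<lambda>(m,n). c m n * E t1 m * E (-t2) n)"
    have "(\<lambda>x. norm (g x)) summable_on UNIV"
      by (rule S2[where B = C]) (simp add: g_def norm_mult cb)
    then have "g summable_on UNIV" by (rule abs_summable_summable)
    then have hs: "(g has_sum infsum g UNIV) UNIV" by simp
    have termeq: "a m n * of_nat m powr (-(of_real \<sigma> - \<i> * of_real t1)) * of_nat n powr (-(cnj (of_real \<sigma> - \<i> * of_real t2)))
        = g (m, n)" for m n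
    proof -
      have "a m n * of_nat m powr (-(of_real \<sigma> + \<i> * of_real (-t1))) * of_nat n powr (-(of_real \<sigma> + \<i> * of_real t2)) = g (m,n)"
        unfolding pow_split by (simp add: g_def c_def)
      then show ?thesis by simp
    qed
    have g0: "g (0, n) = 0" "g (m, 0) = 0" for m n by (simp_all add: g_def c0)
    have dd: "dd_partial a (of_real \<sigma> - \<i> * of_real t1) (cnj (of_real \<sigma> - \<i> * of_real t2))
        = (\<lambda>(M,N). \<Sum>m\<le>M. \<Sum>n\<le>N. g (m,n))"
    proof (intro ext, clarify)
      fix M N
      show "dd_partial a (of_real \<sigma> - \<i> * of_real t1) (cnj (of_real \<sigma> - \<i> * of_real t2)) (M, N) = (\<Sum>m\<le>M. \<Sum>n\<le>N. g (m,n))"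
      proof -
        have i: "(\<Sum>n\<in>{1..N}. g (m,n)) = (\<Sum>n\<le>N. g (m,n))" for m
          by (rule sum_from1) (simp add: g0)
        have o: "(\<Sum>m\<in>{1..M}. \<Sum>n\<le>N. g (m,n)) = (\<Sum>m\<le>M. \<Sum>n\<le>N. g (m,n))"
          by (rule sum_from1) (simp add: g0)
        show ?thesis unfolding dd_partial_def termeq by (simp only: case_prod_conv i o)
      qed
    qed
    have "(dd_partial a (of_real \<sigma> - \<i> * of_real t1) (cnj (of_real \<sigma> - \<i> * of_real t2)) \<longlongrightarrow> infsum g UNIV)
            (sequentially \<times>\<^sub>F sequentially)"
      unfolding dd by (rule L_rect[OF hs])
    then show ?thesis unfolding K_def ds_kernel_def g_def
      by (intro tendsto_Lim) (simp_all add: prod_filter_eq_bot)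
  qed
  have Kinv: "K t1 t2 = K (t1 - t2) 0" for t1 t2
  proof -
    have H: "of_real \<sigma> - \<i> * of_real t \<in> halfplane \<rho>" for t
      by (simp add: halfplane_def \<sigma>_def)
    have eq: "ds_kernel a ((of_real \<sigma> - \<i> * of_real (t1 - t2)) - \<i> * of_real t2) ((of_real \<sigma> - \<i> * of_real 0) - \<i> * of_real t2)
          = ds_kernel a (of_real \<sigma> - \<i> * of_real (t1 - t2)) (of_real \<sigma> - \<i> * of_real 0)"
      using inv H by blast
    have e1: "(of_real \<sigma> - \<i> * of_real (t1 - t2)) - \<i> * of_real t2 = of_real \<sigma> - \<i> * of_real t1"
      by (simp add: algebra_simps)
    have e2: "(of_real \<sigma> - \<i> * of_real 0) - \<i> * of_real t2 = of_real \<sigma> - \<i> * of_real t2"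
      by simp
    show ?thesis unfolding K_def using eq[unfolded e1 e2] .
  qed
  define Z where "Z = suminf wsq"
  define P where "P n t = infsum (\<lambda>m. c m n * E t m) UNIV" for n t
  define Q where "Q m = infsum (\<lambda>n. c m n) UNIV" for m
  have cb2: "norm (c m n) \<le> C * wsq n * wsq m" for m n
    using cb[of m n] by (simp add: mult_ac)
  have sumP: "(\<lambda>m. c m n * E t m) summable_on UNIV" for n t
    by (rule abs_summable_summable, rule S1(1)[where B = "C * wsq n"]) (simp add: norm_mult cb2)
  have normP: "norm (P n t) \<le> (C * Z) * wsq n" for n t
  proof -
    have "norm (infsum (\<lambda>m. c m n * E t m) UNIV) \<le> (C * wsq n) * suminf wsq"
      by (rule S1(2)) (simp add: norm_mult cb2)
    then show ?thesis by (simp add: P_def Z_def mult_ac)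
  qed
  have sumQ: "(\<lambda>n. c m n) summable_on UNIV" for m
    by (rule abs_summable_summable, rule S1(1)[where B = "C * wsq m"]) (simp add: cb)
  have normQ: "norm (Q m) \<le> (C * Z) * wsq m" for m
  proof -
    have "norm (infsum (\<lambda>n. c m n) UNIV) \<le> (C * wsq m) * suminf wsq"
      by (rule S1(2)) (simp add: cb)
    then show ?thesis by (simp add: Q_def Z_def mult_ac)
  qed
  have dsum: "(\<lambda>(m,n). f m n) summable_on UNIV \<times> UNIV" if "\<And>m n. norm (f m n) \<le> C * wsq m * wsq n"
    for f :: "nat \<Rightarrow> nat \<Rightarrow> complex"
  proof -
    have "(\<lambda>x. norm ((\<lambda>(m,n). f m n) x)) summable_on UNIV"
      by (rule S2[where B = C]) (simp add: that)
    then show ?thesis by (simp add: abs_summable_summable)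
  qed
  have PQ: "P n t1 = Q n * E t1 n" for n t1
  proof -
    define d where "d n = P n t1 - Q n * E t1 n" for n
    have key: "infsum (\<lambda>n. d n * E t2 n) UNIV = 0" for t2
    proof -
      have s1: "(\<lambda>(m,n). c m n * E t1 m * E t2 n) summable_on UNIV \<times> UNIV"
        by (rule dsum) (simp add: norm_mult cb)
      have s2: "(\<lambda>(m,n). c m n * (E t1 m * E t2 m)) summable_on UNIV \<times> UNIV"
        by (rule dsum) (simp add: norm_mult cb)
      have "K t1 (-t2) = infsum (\<lambda>(m,n). c m n * E t1 m * E t2 n) UNIV"
        by (simp add: Kform)
      also have "\<dots> = infsum (\<lambda>m. infsum (\<lambda>n. c m n * E t1 m * E t2 n) UNIV) UNIV"
        using infsum_Sigma'_banach[OF s1] by simp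
      also have "\<dots> = infsum (\<lambda>n. infsum (\<lambda>m. c m n * E t1 m * E t2 n) UNIV) UNIV"
        by (rule infsum_swap_banach[OF s1])
      also have "\<dots> = infsum (\<lambda>n. P n t1 * E t2 n) UNIV"
        unfolding P_def by (intro infsum_cong infsum_cmult_left sumP)
      finally have L: "K t1 (-t2) = infsum (\<lambda>n. P n t1 * E t2 n) UNIV" .
      have "K (t1 - (-t2)) 0 = infsum (\<lambda>(m,n). c m n * (E t1 m * E t2 m)) UNIV"
        by (simp add: Kform E_add)
      also have "\<dots> = infsum (\<lambda>m. infsum (\<lambda>n. c m n * (E t1 m * E t2 m)) UNIV) UNIV"
        using infsum_Sigma'_banach[OF s2] by simp
      also have "\<dots> = infsum (\<lambda>m. Q m * E t1 m * E t2 m) UNIV"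
        unfolding Q_def by (intro infsum_cong) (simp add: infsum_cmult_left sumQ mult.assoc)
      finally have R: "K (t1 - (-t2)) 0 = infsum (\<lambda>n. Q n * E t1 n * E t2 n) UNIV" .
      have sL: "(\<lambda>n. P n t1 * E t2 n) summable_on UNIV"
        by (rule abs_summable_summable, rule S1(1)[where B = "C * Z"]) (simp add: norm_mult normP)
      have sR: "(\<lambda>n. Q n * E t1 n * E t2 n) summable_on UNIV"
        by (rule abs_summable_summable, rule S1(1)[where B = "C * Z"]) (simp add: norm_mult normQ)
      have "infsum (\<lambda>n. d n * E t2 n) UNIV = infsum (\<lambda>n. P n t1 * E t2 n - Q n * E t1 n * E t2 n) UNIV"
        by (simp add: d_def algebra_simps)
      also have "\<dots> = K t1 (-t2) - K (t1 - (-t2)) 0"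
        unfolding L R by (rule my_infsum_diff[OF sL sR])
      also have "\<dots> = 0" using Kinv[of t1 "-t2"] by simp
      finally show ?thesis .
    qed
    have sd: "(\<lambda>x. norm (d x)) summable_on UNIV"
    proof (rule S1(1)[where B = "2 * (C * Z)"])
      fix n
      have "norm (d n) \<le> norm (P n t1) + norm (Q n * E t1 n)"
        unfolding d_def by (rule norm_triangle_ineq4)
      also have "\<dots> \<le> (C * Z) * wsq n + (C * Z) * wsq n"
        using normP[of n t1] normQ[of n] by (simp add: norm_mult)
      finally show "norm (d n) \<le> 2 * (C * Z) * wsq n" by simp
    qed
    have d0: "d 0 = 0" by (simp add: d_def P_def Q_def c0)
    have "d n = 0" by (rule uniq_infsum[OF sd d0 key])
    then show ?thesis by (simp add: d_def)
  qed
  have cdiag: "c m n = 0" if "m \<ge> 1" "n \<ge> 1" "m \<noteq> n" for m n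
  proof -
    define d where "d m = c m n - (if m = n then Q n else 0)" for m
    have wn: "wsq n > 0" using that by (simp add: wsq_def)
    have key: "infsum (\<lambda>m. d m * E t m) UNIV = 0" for t
    proof -
      have s1: "(\<lambda>m. c m n * E t m) summable_on UNIV" by (rule sumP)
      have s2: "(\<lambda>m. if m = n then Q n * E t n else 0) summable_on UNIV"
        using has_sum_finite_neutralI[of "{n}" UNIV "\<lambda>m. if m = n then Q n * E t n else 0" "Q n * E t n"]
        by (auto simp: summable_on_def)
      have "infsum (\<lambda>m. d m * E t m) UNIV = infsum (\<lambda>m. c m n * E t m - (if m = n then Q n * E t n else 0)) UNIV"
        by (intro infsum_cong) (simp add: d_def left_diff_distrib)
      also have "\<dots> = P n t - Q n * E t n"
        unfolding my_infsum_diff[OF s1 s2] infsum_single_nat P_def ..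
      also have "\<dots> = 0" using PQ by simp
      finally show ?thesis .
    qed
    have sd: "(\<lambda>x. norm (d x)) summable_on UNIV"
    proof (rule S1(1)[where B = "C * wsq n + norm (Q n) / wsq n"])
      fix m
      have "norm (d m) \<le> norm (c m n) + norm (if m = n then Q n else 0)"
        unfolding d_def by (rule norm_triangle_ineq4)
      also have "norm (c m n) \<le> C * wsq n * wsq m" using cb[of m n] by (simp add: algebra_simps)
      also have "norm (if m = n then Q n else 0) \<le> norm (Q n) / wsq n * wsq m"
        using wn by (auto simp: wsq_nonneg)
      finally show "norm (d m) \<le> (C * wsq n + norm (Q n) / wsq n) * wsq m"
        by (simp add: algebra_simps)
    qed
    have d0: "d 0 = 0" using that by (simp add: d_def c0)
    have "d m = 0" by (rule uniq_infsum[OF sd d0 key])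
    then show ?thesis using that by (simp add: d_def)
  qed
  show ?thesis
  proof (intro allI impI)
    fix m n :: nat assume mn: "m \<ge> 1" "n \<ge> 1" "m \<noteq> n"
    have "c m n = 0" by (rule cdiag[OF mn])
    moreover have "real m powr (-\<sigma>) > 0" "real n powr (-\<sigma>) > 0" using mn by auto
    ultimately show "a m n = 0" by (simp add: c_def)
  qed
qed



lemma backward:
  fixes \<rho> :: real and a :: "nat \<Rightarrow> nat \<Rightarrow> complex"
  assumes diag: "\<forall>m\<ge>1. \<forall>n\<ge>1. m \<noteq> n \<longrightarrow> a m n = 0"
  shows "\<forall>b::real. \<forall>s\<in>halfplane \<rho>. \<forall>u\<in>halfplane \<rho>.
            ds_kernel a (s - \<i> * of_real b) (u - \<i> * of_real b) = ds_kernel a s u"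
proof (intro allI ballI)
  fix b :: real and s u :: complex
  have tm: "a m n * of_nat m powr (-(s - \<i> * of_real b)) * of_nat n powr (-(cnj (u - \<i> * of_real b)))
      = a m n * of_nat m powr (-s) * of_nat n powr (-(cnj u))" if "m \<ge> 1" "n \<ge> 1" for m n
  proof (cases "m = n")
    case True then show ?thesis using diag_term[of m s b u] by (simp add: mult.assoc)
  next
    case False then show ?thesis using diag that by simp
  qed
  have "dd_partial a (s - \<i> * of_real b) (cnj (u - \<i> * of_real b)) = dd_partial a s (cnj u)"
  proof (intro ext, clarify)
    fix M N
    show "dd_partial a (s - \<i> * of_real b) (cnj (u - \<i> * of_real b)) (M, N) = dd_partial a s (cnj u) (M, N)"
      unfolding dd_partial_def case_prod_conv
      by (intro sum.cong refl) (use tm in auto)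
  qed
  then show "ds_kernel a (s - \<i> * of_real b) (u - \<i> * of_real b) = ds_kernel a s u"
    by (simp add: ds_kernel_def)
qed

theorem proposition5p1:
  fixes \<rho> :: real and a :: "nat \<Rightarrow> nat \<Rightarrow> complex"
  assumes "is_ds_kernel \<rho> a"
    and "psd_kernel_on (halfplane \<rho>) (ds_kernel a)"
  shows "(\<forall>b::real. \<forall>s\<in>halfplane \<rho>. \<forall>u\<in>halfplane \<rho>.
            ds_kernel a (s - \<i> * of_real b) (u - \<i> * of_real b) = ds_kernel a s u)
         \<longleftrightarrow> (\<forall>m\<ge>1. \<forall>n\<ge>1. m \<noteq> n \<longrightarrow> a m n = 0)"
  using forward[OF assms(1)] backward[of a \<rho>] by blast

end
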